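(* There is at most one prime $p$ such that the set of boards $\{G_{p,n}: n\ge 1\}$ contains infinitely many boards of outcome class $V$.
   Context: Domineering is a two-player game played on a rectangular grid of unit squares. The players alternate placing dominoes, each covering two adjacent unoccupied squares; the player Vertical must place dominoes vertically (covering two squares in the same column), and the player Horizontal must place them horizontally (covering two squares in the same row). A player with no legal move on her turn loses. $G_{m,n}$ denotes the empty board with vertical dimension $m$ (number of rows) and horizontal dimension $n$ (number of columns). Every position has one of four outcome classes under optimal play: $V$ (Vertical wins whoever moves first), $H$ (Horizontal wins whoever moves first), $1$ (the player who moves first wins), $2$ (the player who moves second wins). *)

theory Defs
  imports "HOL-Computational_Algebra.Primes"
begin

text \<open>Domineering. A cell is (row, column). A position is the finite set of
  unoccupied cells.\<close>

datatype player = Vertical | Horizontal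

fun opp :: "player \<Rightarrow> player" where
  "opp Vertical = Horizontal"
| "opp Horizontal = Vertical"

fun dominoes :: "player \<Rightarrow> (nat \<times> nat) set \<Rightarrow> (nat \<times> nat) set set" where
  "dominoes Vertical S = {{(i,j),(i+1,j)} | i j. (i,j) \<in> S \<and> (i+1,j) \<in> S}"
| "dominoes Horizontal S = {{(i,j),(i,j+1)} | i j. (i,j) \<in> S \<and> (i,j+1) \<in> S}"

lemma dominoes_sub: "d \<in> dominoes P S \<Longrightarrow> d \<subseteq> S \<and> d \<noteq> {}"
  by (cases P) auto

function first_wins :: "player \<Rightarrow> (nat \<times> nat) set \<Rightarrow> bool" where
  "first_wins P S =
     (if finite S then (\<exists>d\<in>dominoes P S. \<not> first_wins (opp P) (S - d)) else False)"
  by auto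
termination
proof (relation "measure (\<lambda>(P, S). card S)")
  show "wf (measure (\<lambda>(P, S). card S))" by simp
next
  fix P :: player and S :: "(nat \<times> nat) set" and d
  assume "finite S" "d \<in> dominoes P S"
  then have "d \<subseteq> S" "d \<noteq> {}" using dominoes_sub by auto
  then have "S - d \<subset> S" by blast
  then have "card (S - d) < card S"
    using \<open>finite S\<close> by (rule psubset_card_mono[rotated])
  then show "((opp P, S - d), P, S) \<in> measure (\<lambda>(P, S). card S)" by simp
qed

datatype outcome = OV | OH | O1 | O2

definition outcome_class :: "(nat \<times> nat) set \<Rightarrow> outcome" where
  "outcome_class S =
     (if first_wins Vertical S \<and> \<not> first_wins Horizontal S then OV
      else if \<not> first_wins Vertical S \<and> first_wins Horizontal S then OH
      else if first_wins Vertical S \<and> first_wins Horizontal S then O1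
      else O2)"

text \<open>The empty board G_{m,n}: m rows, n columns.\<close>
definition board :: "nat \<Rightarrow> nat \<Rightarrow> (nat \<times> nat) set" where
  "board m n = {(i, j). i < m \<and> j < n}"

end

theory Submission
  imports Defs "HOL-Number_Theory.Number_Theory"
begin


lemma opp_opp[simp]: "opp (opp P) = P" by (cases P) auto

lemma card_diff_less: "finite S \<Longrightarrow> d \<subseteq> S \<Longrightarrow> d \<noteq> {} \<Longrightarrow> card (S - d) < card S"
  by (metis Diff_cancel Diff_disjoint Diff_subset Int_absorb2 psubsetI psubset_card_mono)

function W :: "(player \<Rightarrow> 'a set set) \<Rightarrow> player \<Rightarrow> 'a set \<Rightarrow> bool" where
  "W D P S = (if finite S then (\<exists>d\<in>{d \<in> D P. d \<subseteq> S \<and> d \<noteq> {}}. \<not> W D (opp P) (S - d)) else False)"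
  by auto
termination
proof (relation "measure (\<lambda>(D, P, S). card S)")
  show "wf (measure (\<lambda>(D, P, S). card S))" by simp
next
  fix D :: "player \<Rightarrow> 'a set set" and P S d
  assume "finite S" "d \<in> {d \<in> D P. d \<subseteq> S \<and> d \<noteq> {}}"
  then show "((D, opp P, S - d), D, P, S) \<in> measure (\<lambda>(D, P, S). card S)"
    by (simp add: card_diff_less)
qed

declare W.simps[simp del]

lemma W_simp: "finite S \<Longrightarrow> W D P S \<longleftrightarrow> (\<exists>d\<in>D P. d \<subseteq> S \<and> d \<noteq> {} \<and> \<not> W D (opp P) (S - d))"
proof -
  assume "finite S"
  then have "W D P S = (\<exists>d\<in>{d \<in> D P. d \<subseteq> S \<and> d \<noteq> {}}. \<not> W D (opp P) (S - d))"
    by (subst W.simps) simp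
  also have "\<dots> = (\<exists>d\<in>D P. d \<subseteq> S \<and> d \<noteq> {} \<and> \<not> W D (opp P) (S - d))" by blast
  finally show ?thesis .
qed

lemma W_intro: "finite S \<Longrightarrow> d \<in> D P \<Longrightarrow> d \<subseteq> S \<Longrightarrow> d \<noteq> {} \<Longrightarrow> \<not> W D (opp P) (S - d) \<Longrightarrow> W D P S"
  using W_simp by blast

lemma W_inf: "infinite S \<Longrightarrow> \<not> W D P S"
  by (subst W.simps) simp

lemma W_elim: assumes "W D P S"
  and "\<And>d. finite S \<Longrightarrow> d \<in> D P \<Longrightarrow> d \<subseteq> S \<Longrightarrow> d \<noteq> {} \<Longrightarrow> \<not> W D (opp P) (S - d) \<Longrightarrow> R"
  shows R
proof -
  have f: "finite S" using assms(1) W_inf by blast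
  then obtain d where "d \<in> D P" "d \<subseteq> S" "d \<noteq> {}" "\<not> W D (opp P) (S - d)"
    using assms(1) W_simp[OF f] by blast
  then show R using assms(2) f by blast
qed

lemma W_notD: "\<not> W D P S \<Longrightarrow> finite S \<Longrightarrow> d \<in> D P \<Longrightarrow> d \<subseteq> S \<Longrightarrow> d \<noteq> {} \<Longrightarrow> W D (opp P) (S - d)"
  using W_intro by blast

lemma W_empty[simp]: "\<not> W D P {}"
  by (auto elim: W_elim)

lemma W_local:
  assumes "\<And>P d. d \<subseteq> S \<Longrightarrow> d \<in> D P \<longleftrightarrow> d \<in> D' P"
  shows "W D P S = W D' P S"
  using assms
proof (induction "card S" arbitrary: S P rule: less_induct)
  case less
  show ?case
  proof (cases "finite S")
    case False thus ?thesis by (simp add: W_inf)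
  next
    case True
    have IH: "W D (opp P) (S - d) = W D' (opp P) (S - d)" if "d \<subseteq> S" "d \<noteq> {}" for d
      using less.prems that True by (intro less.hyps card_diff_less) auto
    show ?thesis
    proof
      assume "W D P S"
      then obtain d where d: "d \<in> D P" "d \<subseteq> S" "d \<noteq> {}" "\<not> W D (opp P) (S - d)" by (rule W_elim)
      show "W D' P S" using d IH[OF d(2,3)] less.prems[OF d(2)] True by (intro W_intro[of _ d]) auto
    next
      assume "W D' P S"
      then obtain d where d: "d \<in> D' P" "d \<subseteq> S" "d \<noteq> {}" "\<not> W D' (opp P) (S - d)" by (rule W_elim)
      show "W D P S" using d IH[OF d(2,3)] less.prems[OF d(2)] True by (intro W_intro[of _ d]) auto
    qed
  qed
qed

lemma W_mono:
  assumes "\<And>d. d \<subseteq> S \<Longrightarrow> d \<in> D X \<Longrightarrow> d \<in> D' X"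
    "\<And>d. d \<subseteq> S \<Longrightarrow> d \<in> D' (opp X) \<Longrightarrow> d \<in> D (opp X)"
  shows "(W D X S \<longrightarrow> W D' X S) \<and> (\<not> W D (opp X) S \<longrightarrow> \<not> W D' (opp X) S)"
  using assms
proof (induction "card S" arbitrary: S rule: less_induct)
  case less
  show ?case
  proof (cases "finite S")
    case False thus ?thesis by (simp add: W_inf)
  next
    case True
    have IH: "(W D X (S - d) \<longrightarrow> W D' X (S - d)) \<and> (\<not> W D (opp X) (S - d) \<longrightarrow> \<not> W D' (opp X) (S - d))"
      if "d \<subseteq> S" "d \<noteq> {}" for d
      using less.prems that True by (intro less.hyps card_diff_less) auto
    show ?thesis
    proof (intro conjI impI)
      assume "W D X S"
      then obtain d where d: "d \<in> D X" "d \<subseteq> S" "d \<noteq> {}" "\<not> W D (opp X) (S - d)"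
        by (rule W_elim)
      then show "W D' X S" using IH[OF d(2,3)] less.prems True by (intro W_intro[of _ d]) auto
    next
      assume a: "\<not> W D (opp X) S"
      show "\<not> W D' (opp X) S"
      proof
        assume "W D' (opp X) S"
        then obtain d where d: "d \<in> D' (opp X)" "d \<subseteq> S" "d \<noteq> {}" "\<not> W D' X (S - d)"
          by (rule W_elim) auto
        then have "d \<in> D (opp X)" using less.prems by auto
        then have "W D X (S - d)" using W_notD[OF a True] d by fastforce
        then show False using IH[OF d(2,3)] d by auto
      qed
    qed
  qed
qed

lemma W_transport:
  assumes "inj f" "\<And>P. g (opp P) = opp (g P)"
    "\<And>P d. d \<subseteq> S \<Longrightarrow> (f ` d \<in> D' (g P) \<longleftrightarrow> d \<in> D P)"
  shows "W D' (g P) (f ` S) = W D P S"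
  using assms(3)
proof (induction "card S" arbitrary: S P rule: less_induct)
  case less
  show ?case
  proof (cases "finite S")
    case False
    then have "infinite (f ` S)" using assms(1) by (simp add: finite_image_iff inj_on_subset)
    thus ?thesis using False by (simp add: W_inf)
  next
    case True
    have IH: "W D' (g (opp P)) (f ` (S - d)) = W D (opp P) (S - d)" if "d \<subseteq> S" "d \<noteq> {}" for d
      using less.prems that True by (intro less.hyps card_diff_less) auto
    have fin: "finite (f ` S)" using True by simp
    show ?thesis
    proof
      assume "W D' (g P) (f ` S)"
      then obtain e where e: "e \<in> D' (g P)" "e \<subseteq> f ` S" "e \<noteq> {}" "\<not> W D' (opp (g P)) (f ` S - e)"
        by (rule W_elim)
      then obtain d where d: "d \<subseteq> S" "e = f ` d" by (auto simp: subset_image_iff)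
      have eq: "f ` S - e = f ` (S - d)" using d assms(1) by (simp add: image_set_diff)
      have dne: "d \<noteq> {}" using d e by auto
      have dD: "d \<in> D P" using less.prems[OF d(1)] e d by simp
      have "\<not> W D (opp P) (S - d)" using e(4) eq IH[OF d(1) dne] assms(2) by simp
      then show "W D P S" using dD d dne True by (intro W_intro[of _ d]) auto
    next
      assume "W D P S"
      then obtain d where d: "d \<in> D P" "d \<subseteq> S" "d \<noteq> {}" "\<not> W D (opp P) (S - d)"
        by (rule W_elim)
      have eq: "f ` S - f ` d = f ` (S - d)" using assms(1) by (simp add: image_set_diff)
      have fD: "f ` d \<in> D' (g P)" using less.prems[OF d(2)] d by simp
      have "\<not> W D' (opp (g P)) (f ` S - f ` d)" using d(4) eq IH[OF d(2) d(3)] assms(2) by simp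
      moreover have "f ` d \<subseteq> f ` S" "f ` d \<noteq> {}" using d by auto
      ultimately show "W D' (g P) (f ` S)" using fD fin by (intro W_intro[of _ "f ` d"]) auto
    qed
  qed
qed




definition sep :: "(player \<Rightarrow> 'a set set) \<Rightarrow> 'a set \<Rightarrow> 'a set \<Rightarrow> bool" where
  "sep D A B \<longleftrightarrow> A \<inter> B = {} \<and> (\<forall>P d. d \<in> D P \<longrightarrow> d \<subseteq> A \<union> B \<longrightarrow> d \<subseteq> A \<or> d \<subseteq> B)"

lemma sep_mono: "sep D A B \<Longrightarrow> A' \<subseteq> A \<Longrightarrow> B' \<subseteq> B \<Longrightarrow> sep D A' B'"
  unfolding sep_def by blast

lemma sep_sym: "sep D A B \<Longrightarrow> sep D B A"
  unfolding sep_def by blast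

lemma sep_split: "sep D A B \<Longrightarrow> d \<in> D P \<Longrightarrow> d \<subseteq> A \<union> B \<Longrightarrow> d \<subseteq> A \<or> d \<subseteq> B"
  unfolding sep_def by blast

lemma W_sum:
  assumes "sep D A B" "finite A" "finite B"
  shows "(\<not> W D (opp X) A \<longrightarrow> \<not> W D (opp X) B \<longrightarrow> \<not> W D (opp X) (A \<union> B)) \<and>
         (W D X A \<longrightarrow> \<not> W D (opp X) B \<longrightarrow> W D X (A \<union> B))"
  using assms
proof (induction "card (A \<union> B)" arbitrary: A B rule: less_induct)
  case less
  have dis: "A \<inter> B = {}" using less.prems unfolding sep_def by blast
  have fin: "finite (A \<union> B)" using less.prems by simp
  have IH: "(\<not> W D (opp X) A' \<longrightarrow> \<not> W D (opp X) B' \<longrightarrow> \<not> W D (opp X) (A' \<union> B')) \<and>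
         (W D X A' \<longrightarrow> \<not> W D (opp X) B' \<longrightarrow> W D X (A' \<union> B'))"
    if "A' \<union> B' \<subseteq> A \<union> B" "A' \<union> B' \<noteq> A \<union> B" "sep D A' B'" "finite A'" "finite B'" for A' B'
    using that fin by (intro less.hyps) (auto intro: psubset_card_mono)
  show ?case
  proof (intro conjI impI)
    assume a: "\<not> W D (opp X) A" and b: "\<not> W D (opp X) B"
    show "\<not> W D (opp X) (A \<union> B)"
    proof
      assume "W D (opp X) (A \<union> B)"
      then obtain d where d: "d \<in> D (opp X)" "d \<subseteq> A \<union> B" "d \<noteq> {}" "\<not> W D X (A \<union> B - d)"
        by (rule W_elim) auto
      from sep_split[OF less.prems(1) d(1,2)] show False
      proof
        assume dA: "d \<subseteq> A"
        have "W D X (A - d)" using W_notD[OF a less.prems(2) d(1) dA d(3)] by simp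
        moreover have "A \<union> B - d = (A - d) \<union> B" using dA dis by blast
        moreover have "sep D (A - d) B" using less.prems(1) by (rule sep_mono) auto
        ultimately have "W D X (A \<union> B - d)"
          using IH[of "A - d" B] b dA d(3) less.prems by auto
        then show False using d by simp
      next
        assume dB: "d \<subseteq> B"
        have "W D X (B - d)" using W_notD[OF b less.prems(3) d(1) dB d(3)] by simp
        moreover have "A \<union> B - d = (B - d) \<union> A" using dB dis by blast
        moreover have "sep D (B - d) A" using sep_sym[OF less.prems(1)] by (rule sep_mono) auto
        ultimately have "W D X (A \<union> B - d)"
          using IH[of "B - d" A] a dB d(3) less.prems by auto
        then show False using d by simp
      qed
    qed
  next
    assume a: "W D X A" and b: "\<not> W D (opp X) B"
    obtain d where d: "d \<in> D X" "d \<subseteq> A" "d \<noteq> {}" "\<not> W D (opp X) (A - d)"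
      using a by (rule W_elim) auto
    have eq: "A \<union> B - d = (A - d) \<union> B" using d dis by blast
    have "sep D (A - d) B" using less.prems(1) by (rule sep_mono) auto
    then have "\<not> W D (opp X) (A \<union> B - d)"
      using IH[of "A - d" B] b d less.prems eq by auto
    then show "W D X (A \<union> B)" using d fin by (intro W_intro[of _ d]) auto
  qed
qed

lemma W_sub:
  assumes "sep D A B" "finite A" "finite B" "\<not> W D X B"
  shows "(\<not> W D (opp X) (A \<union> B) \<longrightarrow> \<not> W D (opp X) A) \<and> (W D X (A \<union> B) \<longrightarrow> W D X A)"
  using assms
proof (induction "card (A \<union> B)" arbitrary: A B rule: less_induct)
  case less
  have dis: "A \<inter> B = {}" using less.prems unfolding sep_def by blast
  have fin: "finite (A \<union> B)" using less.prems by simp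
  have IH: "(\<not> W D (opp X) (A' \<union> B') \<longrightarrow> \<not> W D (opp X) A') \<and> (W D X (A' \<union> B') \<longrightarrow> W D X A')"
    if "A' \<union> B' \<subseteq> A \<union> B" "A' \<union> B' \<noteq> A \<union> B" "sep D A' B'" "finite A'" "finite B'" "\<not> W D X B'" for A' B'
    using that fin by (intro less.hyps) (auto intro: psubset_card_mono)
  have partb: "W D X A'" if h: "W D X (A' \<union> B)" "A' \<subseteq> A" "A' \<noteq> A" for A'
  proof -
    have fA': "finite A'" using h less.prems finite_subset by blast
    obtain e where e: "e \<in> D X" "e \<subseteq> A' \<union> B" "e \<noteq> {}" "\<not> W D (opp X) (A' \<union> B - e)"
      using h(1) by (rule W_elim) auto
    have sA': "sep D A' B" using less.prems(1) h(2) by (rule sep_mono) auto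
    from sep_split[OF sA' e(1,2)] show ?thesis
    proof
      assume eA: "e \<subseteq> A'"
      have eq: "A' \<union> B - e = (A' - e) \<union> B" using eA dis h(2) by blast
      have "sep D (A' - e) B" using sA' by (rule sep_mono) auto
      then have "\<not> W D (opp X) (A' - e)"
        using IH[of "A' - e" B] eq e less.prems h fA' by auto
      then show ?thesis using e eA fA' by (intro W_intro[of _ e]) auto
    next
      assume eB: "e \<subseteq> B"
      have "W D (opp X) (B - e)" using W_notD[OF less.prems(4) less.prems(3) e(1) eB e(3)] .
      then obtain f where f: "f \<in> D (opp X)" "f \<subseteq> B - e" "f \<noteq> {}" "\<not> W D X (B - e - f)"
        by (rule W_elim) auto
      have eq: "A' \<union> B - e = A' \<union> (B - e)" using eB dis h(2) by blast
      have "W D X (A' \<union> (B - e) - f)"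
        using W_notD[of D "opp X" "A' \<union> (B - e)" f] e(4) eq f fA' less.prems(3) by auto
      moreover have "A' \<union> (B - e) - f = A' \<union> (B - e - f)" using f dis h(2) by blast
      moreover have "sep D A' (B - e - f)" using sA' by (rule sep_mono) auto
      moreover have "A' \<union> (B - e - f) \<noteq> A \<union> B" using e(3) eB dis h(2) by blast
      moreover have "A' \<union> (B - e - f) \<subseteq> A \<union> B" using h(2) by blast
      ultimately show ?thesis
        using IH[of A' "B - e - f"] f fA' less.prems by auto
    qed
  qed
  show ?case
  proof (intro conjI impI)
    assume a: "\<not> W D (opp X) (A \<union> B)"
    show "\<not> W D (opp X) A"
    proof
      assume "W D (opp X) A"
      then obtain d where d: "d \<in> D (opp X)" "d \<subseteq> A" "d \<noteq> {}" "\<not> W D X (A - d)"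
        by (rule W_elim) auto
      have "W D X (A \<union> B - d)" using W_notD[OF a fin d(1)] d by auto
      moreover have "A \<union> B - d = (A - d) \<union> B" using d dis by blast
      ultimately have "W D X (A - d)" using partb[of "A - d"] d by auto
      then show False using d by simp
    qed
  next
    assume a: "W D X (A \<union> B)"
    obtain e where e: "e \<in> D X" "e \<subseteq> A \<union> B" "e \<noteq> {}" "\<not> W D (opp X) (A \<union> B - e)"
      using a by (rule W_elim) auto
    from sep_split[OF less.prems(1) e(1,2)] show "W D X A"
    proof
      assume eA: "e \<subseteq> A"
      have eq: "A \<union> B - e = (A - e) \<union> B" using eA dis by blast
      have "sep D (A - e) B" using less.prems(1) by (rule sep_mono) auto
      then have "\<not> W D (opp X) (A - e)"
        using IH[of "A - e" B] eq e less.prems by auto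
      then show ?thesis using e eA less.prems by (intro W_intro[of _ e]) auto
    next
      assume eB: "e \<subseteq> B"
      have "W D (opp X) (B - e)" using W_notD[OF less.prems(4) less.prems(3) e(1) eB e(3)] .
      then obtain f where f: "f \<in> D (opp X)" "f \<subseteq> B - e" "f \<noteq> {}" "\<not> W D X (B - e - f)"
        by (rule W_elim) auto
      have eq: "A \<union> B - e = A \<union> (B - e)" using eB dis by blast
      have "W D X (A \<union> (B - e) - f)"
        using W_notD[of D "opp X" "A \<union> (B - e)" f] e(4) eq f less.prems by auto
      moreover have "A \<union> (B - e) - f = A \<union> (B - e - f)" using f dis by blast
      moreover have "sep D A (B - e - f)" using less.prems(1) by (rule sep_mono) auto
      ultimately show ?thesis
        using IH[of A "B - e - f"] f e eB less.prems by auto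
    qed
  qed
qed

lemma W_mirror:
  assumes "inj f" "sep D A (f ` A)" "finite A"
    "\<And>P d. d \<subseteq> A \<Longrightarrow> (f ` d \<in> D (opp P) \<longleftrightarrow> d \<in> D P)"
  shows "\<not> W D P (A \<union> f ` A)"
  using assms(2-4)
proof (induction "card A" arbitrary: A P rule: less_induct)
  case less
  have dis: "A \<inter> f ` A = {}" using less.prems unfolding sep_def by blast
  have fin: "finite (A \<union> f ` A)" using less.prems by simp
  have IH: "\<not> W D P' (A' \<union> f ` A')" if "A' \<subseteq> A" "A' \<noteq> A" for A' P'
  proof -
    have "sep D A' (f ` A')" using less.prems(1) by (rule sep_mono) (use that in auto)
    moreover have "card A' < card A" using that less.prems(2) by (auto intro: psubset_card_mono)
    ultimately show ?thesis using that less.prems by (intro less.hyps) (auto intro: finite_subset)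
  qed
  show ?case
  proof
    assume "W D P (A \<union> f ` A)"
    then obtain d where d: "d \<in> D P" "d \<subseteq> A \<union> f ` A" "d \<noteq> {}" "\<not> W D (opp P) (A \<union> f ` A - d)"
      by (rule W_elim) auto
    from sep_split[OF less.prems(1) d(1,2)] show False
    proof
      assume dA: "d \<subseteq> A"
      have fd: "f ` d \<in> D (opp P)" using less.prems(3)[OF dA] d by simp
      have eq1: "A \<union> f ` A - d = (A - d) \<union> f ` A" using dA dis by blast
      have eq2: "(A - d) \<union> f ` A - f ` d = (A - d) \<union> f ` (A - d)"
        using dA dis assms(1) by (auto simp: inj_eq)
      have "\<not> W D P ((A - d) \<union> f ` (A - d))" using IH[of "A - d"] dA d(3) by auto
      then have "W D (opp P) (A \<union> f ` A - d)"
        using fd eq1 eq2 fin dA d(3) by (intro W_intro[of _ "f ` d"]) auto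
      then show False using d by simp
    next
      assume dB: "d \<subseteq> f ` A"
      then obtain e where e: "e \<subseteq> A" "d = f ` e" by (auto simp: subset_image_iff)
      have ene: "e \<noteq> {}" using e d by auto
      have eD: "e \<in> D (opp P)" using less.prems(3)[OF e(1), of "opp P"] d e by simp
      have eq1: "A \<union> f ` A - d = A \<union> f ` (A - e)" using e dis assms(1) by (auto simp: inj_eq)
      have eq2: "A \<union> f ` (A - e) - e = (A - e) \<union> f ` (A - e)" using e dis by blast
      have "\<not> W D P ((A - e) \<union> f ` (A - e))" using IH[of "A - e"] e ene by auto
      then have "W D (opp P) (A \<union> f ` A - d)"
        using eD eq1 eq2 fin e ene by (intro W_intro[of _ e]) auto
      then show False using d by simp
    qed
  qed
qed




definition Dom :: "player \<Rightarrow> (nat \<times> nat) set set" where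
  "Dom P = (case P of Vertical \<Rightarrow> {{(i,j),(i+1,j)} | i j. True}
                    | Horizontal \<Rightarrow> {{(i,j),(i,j+1)} | i j. True})"

lemma Dom_V: "d \<in> Dom Vertical \<longleftrightarrow> (\<exists>i j. d = {(i,j),(i+1,j)})"
  by (simp add: Dom_def)
lemma Dom_H: "d \<in> Dom Horizontal \<longleftrightarrow> (\<exists>i j. d = {(i,j),(i,j+1)})"
  by (simp add: Dom_def)

lemma dominoes_Dom: "dominoes P S = {d \<in> Dom P. d \<subseteq> S}"
  by (cases P) (auto simp: Dom_def)

declare first_wins.simps[simp del]

lemma fw_W: "first_wins P S = W Dom P S"
proof (induction P S rule: first_wins.induct)
  case (1 P S)
  show ?case
  proof (cases "finite S")
    case False thus ?thesis by (subst first_wins.simps) (simp add: W_inf)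
  next
    case True
    have ne: "d \<in> Dom P \<Longrightarrow> d \<noteq> {}" for d by (cases P) (auto simp: Dom_def)
    have "first_wins P S = (\<exists>d\<in>dominoes P S. \<not> first_wins (opp P) (S - d))"
      using True by (subst first_wins.simps) simp
    also have "\<dots> = (\<exists>d\<in>dominoes P S. \<not> W Dom (opp P) (S - d))"
      using 1 True by auto
    also have "\<dots> = W Dom P S" using True ne by (auto simp: W_simp dominoes_Dom)
    finally show ?thesis .
  qed
qed

lemma image_pair:
  assumes "inj f" "f ` d = {a, b}"
  shows "\<exists>u v. d = {u, v} \<and> f u = a \<and> f v = b"
proof -
  obtain u where u: "u \<in> d" "f u = a" using assms(2) by (metis imageE insertI1)
  obtain v where v: "v \<in> d" "f v = b" using assms(2) by (metis imageE insertI1 insert_commute)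
  have "d \<subseteq> {u, v}"
  proof
    fix x assume "x \<in> d"
    then have "f x \<in> {a, b}" using assms(2) by blast
    then show "x \<in> {u, v}" using u v assms(1) by (auto simp: inj_eq)
  qed
  then show ?thesis using u v by blast
qed

definition shR :: "nat \<Rightarrow> nat \<times> nat \<Rightarrow> nat \<times> nat" where "shR a = (\<lambda>(i,j). (i+a, j))"
definition shC :: "nat \<Rightarrow> nat \<times> nat \<Rightarrow> nat \<times> nat" where "shC b = (\<lambda>(i,j). (i, j+b))"
definition tr :: "nat \<times> nat \<Rightarrow> nat \<times> nat" where "tr = (\<lambda>(i,j). (j, i))"
definition mir :: "nat \<Rightarrow> nat \<times> nat \<Rightarrow> nat \<times> nat" where "mir m = (\<lambda>(i,j). (j+m, i))"

lemma inj_shR: "inj (shR a)" by (auto simp: inj_def shR_def)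
lemma inj_shC: "inj (shC a)" by (auto simp: inj_def shC_def)
lemma inj_tr: "inj tr" by (auto simp: inj_def tr_def)
lemma inj_mir: "inj (mir m)" by (auto simp: inj_def mir_def)

lemma shR_Dom: "shR a ` d \<in> Dom P \<longleftrightarrow> d \<in> Dom P"
proof (cases P)
  case Vertical
  show ?thesis unfolding Vertical Dom_V
  proof
    assume "\<exists>i j. shR a ` d = {(i, j), (i + 1, j)}"
    then obtain i j where "shR a ` d = {(i, j), (i + 1, j)}" by blast
    from image_pair[OF inj_shR this] obtain u v where "d = {u,v}" "shR a u = (i,j)" "shR a v = (i+1,j)" by blast
    then show "\<exists>i j. d = {(i, j), (i + 1, j)}" by (cases u; cases v) (auto simp: shR_def; blast)
  qed (auto simp: shR_def; blast)
next
  case Horizontal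
  show ?thesis unfolding Horizontal Dom_H
  proof
    assume "\<exists>i j. shR a ` d = {(i, j), (i, j + 1)}"
    then obtain i j where "shR a ` d = {(i, j), (i, j + 1)}" by blast
    from image_pair[OF inj_shR this] obtain u v where "d = {u,v}" "shR a u = (i,j)" "shR a v = (i,j+1)" by blast
    then show "\<exists>i j. d = {(i, j), (i, j + 1)}" by (cases u; cases v) (auto simp: shR_def; blast)
  qed (auto simp: shR_def; blast)
qed

lemma shC_Dom: "shC a ` d \<in> Dom P \<longleftrightarrow> d \<in> Dom P"
proof (cases P)
  case Vertical
  show ?thesis unfolding Vertical Dom_V
  proof
    assume "\<exists>i j. shC a ` d = {(i, j), (i + 1, j)}"
    then obtain i j where "shC a ` d = {(i, j), (i + 1, j)}" by blast
    from image_pair[OF inj_shC this] obtain u v where "d = {u,v}" "shC a u = (i,j)" "shC a v = (i+1,j)" by blast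
    then show "\<exists>i j. d = {(i, j), (i + 1, j)}" by (cases u; cases v) (auto simp: shC_def; blast)
  qed (auto simp: shC_def; blast)
next
  case Horizontal
  show ?thesis unfolding Horizontal Dom_H
  proof
    assume "\<exists>i j. shC a ` d = {(i, j), (i, j + 1)}"
    then obtain i j where "shC a ` d = {(i, j), (i, j + 1)}" by blast
    from image_pair[OF inj_shC this] obtain u v where "d = {u,v}" "shC a u = (i,j)" "shC a v = (i,j+1)" by blast
    then show "\<exists>i j. d = {(i, j), (i, j + 1)}" by (cases u; cases v) (auto simp: shC_def; blast)
  qed (auto simp: shC_def; blast)
qed

lemma tr_Dom: "tr ` d \<in> Dom (opp P) \<longleftrightarrow> d \<in> Dom P"
proof (cases P)
  case Vertical
  show ?thesis unfolding Vertical opp.simps Dom_V Dom_H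
  proof
    assume "\<exists>i j. tr ` d = {(i, j), (i, j + 1)}"
    then obtain i j where "tr ` d = {(i, j), (i, j + 1)}" by blast
    from image_pair[OF inj_tr this] obtain u v where "d = {u,v}" "tr u = (i,j)" "tr v = (i,j+1)" by blast
    then show "\<exists>i j. d = {(i, j), (i + 1, j)}" by (cases u; cases v) (auto simp: tr_def; blast)
  qed (auto simp: tr_def; blast)
next
  case Horizontal
  show ?thesis unfolding Horizontal opp.simps Dom_V Dom_H
  proof
    assume "\<exists>i j. tr ` d = {(i, j), (i + 1, j)}"
    then obtain i j where "tr ` d = {(i, j), (i + 1, j)}" by blast
    from image_pair[OF inj_tr this] obtain u v where "d = {u,v}" "tr u = (i,j)" "tr v = (i+1,j)" by blast
    then show "\<exists>i j. d = {(i, j), (i, j + 1)}" by (cases u; cases v) (auto simp: tr_def; blast)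
  qed (auto simp: tr_def; blast)
qed

lemma mir_Dom: "mir m ` d \<in> Dom (opp P) \<longleftrightarrow> d \<in> Dom P"
proof (cases P)
  case Vertical
  show ?thesis unfolding Vertical opp.simps Dom_V Dom_H
  proof
    assume "\<exists>i j. mir m ` d = {(i, j), (i, j + 1)}"
    then obtain i j where "mir m ` d = {(i, j), (i, j + 1)}" by blast
    from image_pair[OF inj_mir this] obtain u v where "d = {u,v}" "mir m u = (i,j)" "mir m v = (i,j+1)" by blast
    then show "\<exists>i j. d = {(i, j), (i + 1, j)}" by (cases u; cases v) (auto simp: mir_def; blast)
  qed (auto simp: mir_def; blast)
next
  case Horizontal
  show ?thesis unfolding Horizontal opp.simps Dom_V Dom_H
  proof
    assume "\<exists>i j. mir m ` d = {(i, j), (i + 1, j)}"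
    then obtain i j where "mir m ` d = {(i, j), (i + 1, j)}" by blast
    from image_pair[OF inj_mir this] obtain u v where "d = {u,v}" "mir m u = (i,j)" "mir m v = (i+1,j)" by blast
    then show "\<exists>i j. d = {(i, j), (i, j + 1)}" by (cases u; cases v) (auto simp: mir_def; blast)
  qed (auto simp: mir_def; blast)
qed

lemma finite_board[simp]: "finite (board m n)"
proof -
  have "board m n \<subseteq> {..<m} \<times> {..<n}" by (auto simp: board_def)
  then show ?thesis by (rule finite_subset) simp
qed

lemma board_rows: "board (m1 + m2) n = board m1 n \<union> shR m1 ` board m2 n"
proof -
  have "x \<in> shR m1 ` board m2 n" if "x \<in> board (m1 + m2) n" "x \<notin> board m1 n" for x
    using that by (cases x) (auto simp: board_def shR_def image_iff intro!: exI[of _ "fst x - m1"])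
  then show ?thesis by (auto simp: board_def shR_def)
qed

lemma board_cols: "board m (n1 + n2) = board m n1 \<union> shC n1 ` board m n2"
proof -
  have "x \<in> shC n1 ` board m n2" if "x \<in> board m (n1 + n2)" "x \<notin> board m n1" for x
    using that by (cases x) (auto simp: board_def shC_def image_iff intro!: exI[of _ "snd x - n1"])
  then show ?thesis by (auto simp: board_def shC_def)
qed

lemma board_tr: "board n m = tr ` board m n"
  by (auto simp: board_def tr_def image_iff)

lemma board_mir: "board (2 * m) m = board m m \<union> mir m ` board m m"
proof -
  have "x \<in> mir m ` board m m" if "x \<in> board (2*m) m" "x \<notin> board m m" for x
    using that by (cases x) (auto simp: board_def mir_def image_iff intro!: exI[of _ "fst x - m"])
  then show ?thesis by (auto simp: board_def mir_def)
qed




definition Drow :: "nat \<Rightarrow> player \<Rightarrow> (nat \<times> nat) set set" where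
  "Drow a P = {d \<in> Dom P. d \<subseteq> {x. fst x < a} \<or> d \<subseteq> {x. a \<le> fst x}}"
definition Dcol :: "nat \<Rightarrow> player \<Rightarrow> (nat \<times> nat) set set" where
  "Dcol a P = {d \<in> Dom P. d \<subseteq> {x. snd x < a} \<or> d \<subseteq> {x. a \<le> snd x}}"

lemma Drow_H: "d \<in> Dom Horizontal \<Longrightarrow> d \<in> Drow a Horizontal"
  by (auto simp: Drow_def Dom_H)
lemma Dcol_V: "d \<in> Dom Vertical \<Longrightarrow> d \<in> Dcol a Vertical"
  by (auto simp: Dcol_def Dom_V)

lemma Drow_sub: "d \<in> Drow a P \<Longrightarrow> d \<in> Dom P" by (simp add: Drow_def)
lemma Dcol_sub: "d \<in> Dcol a P \<Longrightarrow> d \<in> Dom P" by (simp add: Dcol_def)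

lemma Drow_local: "S \<subseteq> {x. fst x < a} \<or> S \<subseteq> {x. a \<le> fst x} \<Longrightarrow> W (Drow a) P S = W Dom P S"
  by (rule W_local) (auto simp: Drow_def)
lemma Dcol_local: "S \<subseteq> {x. snd x < a} \<or> S \<subseteq> {x. a \<le> snd x} \<Longrightarrow> W (Dcol a) P S = W Dom P S"
  by (rule W_local) (auto simp: Dcol_def)

lemma sep_Drow: "A \<subseteq> {x. fst x < a} \<Longrightarrow> B \<subseteq> {x. a \<le> fst x} \<Longrightarrow> sep (Drow a) A B"
  unfolding sep_def Drow_def by fastforce
lemma sep_Dcol: "A \<subseteq> {x. snd x < a} \<Longrightarrow> B \<subseteq> {x. a \<le> snd x} \<Longrightarrow> sep (Dcol a) A B"
  unfolding sep_def Dcol_def by fastforce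

lemma W_shR: "W Dom P (shR a ` S) = W Dom P S"
  using W_transport[OF inj_shR, where g="\<lambda>P. P" and D=Dom and D'=Dom and S=S and P=P] by (simp add: shR_Dom)
lemma W_shC: "W Dom P (shC a ` S) = W Dom P S"
  using W_transport[OF inj_shC, where g="\<lambda>P. P" and D=Dom and D'=Dom and S=S and P=P] by (simp add: shC_Dom)
lemma W_tr: "W Dom (opp P) (tr ` S) = W Dom P S"
  using W_transport[OF inj_tr, where g=opp and D=Dom and D'=Dom and S=S and P=P] by (simp add: tr_Dom)

lemma W_board_tr: "W Dom P (board n m) = W Dom (opp P) (board m n)"
  using W_tr[of "opp P" "board m n"] by (simp add: board_tr[symmetric])

definition Vb :: "nat \<Rightarrow> nat \<Rightarrow> bool" where
  "Vb m n \<longleftrightarrow> W Dom Vertical (board m n) \<and> \<not> W Dom Horizontal (board m n)"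

lemma board_fst: "board m n \<subseteq> {x. fst x < m}" by (auto simp: board_def)
lemma board_snd: "board m n \<subseteq> {x. snd x < n}" by (auto simp: board_def)
lemma shR_fst: "shR a ` S \<subseteq> {x. a \<le> fst x}" by (auto simp: shR_def)
lemma shC_snd: "shC a ` S \<subseteq> {x. a \<le> snd x}" by (auto simp: shC_def)
lemma mir_fst: "mir a ` S \<subseteq> {x. a \<le> fst x}" by (auto simp: mir_def)

lemma Vb_stack:
  assumes "Vb m1 n" "Vb m2 n"
  shows "Vb (m1 + m2) n"
proof -
  let ?A = "board m1 n" and ?B = "shR m1 ` board m2 n" and ?D = "Drow m1"
  have sp: "sep ?D ?A ?B" by (rule sep_Drow[OF board_fst shR_fst])
  have A: "W ?D Vertical ?A" "\<not> W ?D Horizontal ?A"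
    using assms(1) Drow_local[of ?A m1] board_fst unfolding Vb_def by auto
  have B: "W ?D Vertical ?B" "\<not> W ?D Horizontal ?B"
    using assms(2) Drow_local[of ?B m1] shR_fst W_shR unfolding Vb_def by auto
  have "(\<not> W ?D (opp Vertical) ?A \<longrightarrow> \<not> W ?D (opp Vertical) ?B \<longrightarrow> \<not> W ?D (opp Vertical) (?A \<union> ?B)) \<and>
         (W ?D Vertical ?A \<longrightarrow> \<not> W ?D (opp Vertical) ?B \<longrightarrow> W ?D Vertical (?A \<union> ?B))"
    by (rule W_sum[OF sp]) auto
  then have C: "\<not> W ?D Horizontal (?A \<union> ?B)" "W ?D Vertical (?A \<union> ?B)" using A B by auto
  have "(W ?D Vertical (?A \<union> ?B) \<longrightarrow> W Dom Vertical (?A \<union> ?B)) \<and>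
        (\<not> W ?D (opp Vertical) (?A \<union> ?B) \<longrightarrow> \<not> W Dom (opp Vertical) (?A \<union> ?B))"
    by (rule W_mono) (auto intro: Drow_H Drow_sub)
  then show ?thesis using C unfolding Vb_def board_rows by auto
qed

lemma Vb_mult: "Vb m n \<Longrightarrow> 1 \<le> k \<Longrightarrow> Vb (k * m) n"
proof (induction k)
  case 0 thus ?case by simp
next
  case (Suc k)
  show ?case
  proof (cases "k = 0")
    case True thus ?thesis using Suc by simp
  next
    case False
    then have "Vb (k * m) n" using Suc by simp
    then have "Vb (m + k * m) n" using Vb_stack Suc by blast
    then show ?thesis by simp
  qed
qed

lemma Vb_tr_contra: "Vb m n \<Longrightarrow> Vb n m \<Longrightarrow> False"
  using W_board_tr[of Vertical n m] unfolding Vb_def by simp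

lemma not_Vb_sq: "\<not> Vb c c"
  using Vb_tr_contra by blast

lemma Vb_0: "\<not> Vb m 0"
proof -
  have "board m 0 = {}" by (auto simp: board_def)
  then show ?thesis by (simp add: Vb_def)
qed

lemma mirror: "\<not> W Dom Vertical (board m (2 * m))"
proof -
  let ?A = "board m m" and ?D = "Drow m"
  have sp: "sep ?D ?A (mir m ` ?A)" by (rule sep_Drow[OF board_fst mir_fst])
  have cond: "mir m ` d \<in> ?D (opp P) \<longleftrightarrow> d \<in> ?D P" if "d \<subseteq> ?A" for P d
  proof -
    have "d \<subseteq> {x. fst x < m}" using that board_fst by blast
    moreover have "mir m ` d \<subseteq> {x. m \<le> fst x}" using mir_fst by blast
    ultimately have "mir m ` d \<in> ?D (opp P) \<longleftrightarrow> mir m ` d \<in> Dom (opp P)"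
      "d \<in> ?D P \<longleftrightarrow> d \<in> Dom P" by (auto simp: Drow_def)
    then show ?thesis using mir_Dom by simp
  qed
  have "\<not> W ?D Horizontal (?A \<union> mir m ` ?A)"
    by (rule W_mirror[OF inj_mir sp finite_board cond])
  moreover have "(W ?D Vertical (?A \<union> mir m ` ?A) \<longrightarrow> W Dom Vertical (?A \<union> mir m ` ?A)) \<and>
        (\<not> W ?D (opp Vertical) (?A \<union> mir m ` ?A) \<longrightarrow> \<not> W Dom (opp Vertical) (?A \<union> mir m ` ?A))"
    by (rule W_mono) (auto intro: Drow_H Drow_sub)
  ultimately have "\<not> W Dom Horizontal (board (2 * m) m)" unfolding board_mir by auto
  then show ?thesis using W_board_tr[of Vertical m "2 * m"] by simp
qed

lemma Vb_sub:
  assumes "Vb m (a + b)" "\<not> W Dom Vertical (board m b)"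
  shows "Vb m a"
proof -
  let ?A = "board m a" and ?B = "shC a ` board m b" and ?D = "Dcol a"
  have sp: "sep ?D ?A ?B" by (rule sep_Dcol[OF board_snd shC_snd])
  have "(W Dom Vertical (?A \<union> ?B) \<longrightarrow> W ?D Vertical (?A \<union> ?B)) \<and>
        (\<not> W Dom (opp Vertical) (?A \<union> ?B) \<longrightarrow> \<not> W ?D (opp Vertical) (?A \<union> ?B))"
    by (rule W_mono) (auto intro: Dcol_V Dcol_sub)
  then have C: "W ?D Vertical (?A \<union> ?B)" "\<not> W ?D Horizontal (?A \<union> ?B)"
    using assms(1) unfolding Vb_def board_cols by auto
  have B: "\<not> W ?D Vertical ?B"
    using assms(2) Dcol_local[of ?B a] shC_snd W_shC by auto
  have "(\<not> W ?D (opp Vertical) (?A \<union> ?B) \<longrightarrow> \<not> W ?D (opp Vertical) ?A) \<and>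
        (W ?D Vertical (?A \<union> ?B) \<longrightarrow> W ?D Vertical ?A)"
    by (rule W_sub[OF sp finite_board _ B]) simp
  then have "\<not> W ?D Horizontal ?A" "W ?D Vertical ?A" using C by auto
  then show ?thesis using Dcol_local[of ?A a] board_snd unfolding Vb_def by auto
qed

lemma Vb_step: "Vb m n \<Longrightarrow> 2 * m \<le> n \<Longrightarrow> Vb m (n - 2 * m)"
  using Vb_sub[of m "n - 2 * m" "2 * m"] mirror[of m] by simp

lemma board22_H: "W Dom Horizontal (board 2 2)"
proof -
  have b: "board 2 2 = {(0,0),(0,1),(1,0),(1,1)}"
    by (auto simp: board_def less_2_cases_iff)
  have r: "board 2 2 - {(0,0),(0,1)} = {(1,0),(1,1)}" using b by auto
  have "\<not> W Dom Vertical {(1::nat,0::nat),(1,1)}"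
  proof
    assume "W Dom Vertical {(1::nat,0::nat),(1,1)}"
    then obtain d where "d \<in> Dom Vertical" "d \<subseteq> {(1::nat,0::nat),(1,1)}" by (rule W_elim) auto
    then show False by (auto simp: Dom_V)
  qed
  moreover have "{(0::nat,0::nat),(0,1)} \<in> Dom Horizontal" by (auto simp: Dom_H)
  ultimately show ?thesis using r b by (intro W_intro[of _ "{(0,0),(0,1)}"]) auto
qed

lemma not_Vb22: "\<not> Vb 2 2"
  using board22_H by (simp add: Vb_def)




lemma Vb_down: "Vb m n \<Longrightarrow> 2 * m * t \<le> n \<Longrightarrow> Vb m (n - 2 * m * t)"
proof (induction t)
  case 0 thus ?case by simp
next
  case (Suc t)
  then have "Vb m (n - 2 * m * t)" by simp
  moreover have "2 * m \<le> n - 2 * m * t" using Suc.prems by simp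
  ultimately have "Vb m (n - 2 * m * t - 2 * m)" by (rule Vb_step)
  then show ?case by (simp add: algebra_simps)
qed

lemma residue:
  assumes inf: "infinite {n. n \<ge> 1 \<and> Vb m n}"
  shows "\<exists>r < 2 * m. \<forall>c. c \<ge> 1 \<longrightarrow> c mod (2 * m) = r \<longrightarrow> Vb m c"
proof -
  let ?N = "{n. n \<ge> 1 \<and> Vb m n}"
  have "m \<noteq> 0"
  proof
    assume "m = 0"
    then have "board m n = {}" for n by (auto simp: board_def)
    then have e: "?N = {}" by (auto simp: Vb_def)
    show False using inf e by (metis finite.emptyI)
  qed
  have "\<exists>r < 2 * m. infinite {n \<in> ?N. n mod (2 * m) = r}"
  proof (rule ccontr)
    assume "\<not> ?thesis"
    then have "finite (\<Union>r<2 * m. {n \<in> ?N. n mod (2 * m) = r})" by auto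
    moreover have "?N \<subseteq> (\<Union>r<2 * m. {n \<in> ?N. n mod (2 * m) = r})"
      using \<open>m \<noteq> 0\<close> by auto
    ultimately show False using inf finite_subset by blast
  qed
  then obtain r where r: "r < 2 * m" "infinite {n \<in> ?N. n mod (2 * m) = r}" by blast
  have "Vb m c" if "c \<ge> 1" "c mod (2 * m) = r" for c
  proof -
    obtain n where n: "n \<in> {n \<in> ?N. n mod (2 * m) = r}" "c \<le> n"
      using r(2) by (meson infinite_nat_iff_unbounded_le)
    then have "2 * m dvd n - c" using that mod_eq_dvd_iff_nat[of c n "2 * m"] by simp
    then obtain t where t: "n - c = 2 * m * t" by blast
    have "Vb m (n - 2 * m * t)" using Vb_down[of m n t] n t by simp
    moreover have "n - 2 * m * t = c" using t n by simp
    ultimately show ?thesis by simp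
  qed
  then show ?thesis using r by blast
qed

lemma solve_mod:
  assumes "coprime a (n::nat)" "r < n"
  shows "\<exists>j \<ge> 1. (j * a) mod n = r"
proof -
  obtain x where x: "[a * x = Suc 0] (mod n)" using cong_solve_coprime_nat[OF assms(1)] by blast
  have "[a * x * r = Suc 0 * r] (mod n)" using x by (rule cong_mult) simp
  then have "(a * x * r) mod n = r" using assms(2) by (simp add: cong_def)
  moreover have "((x * r + n) * a) mod n = (a * x * r) mod n" by (simp add: algebra_simps)
  ultimately show ?thesis using assms by (intro exI[of _ "x * r + n"]) auto
qed

lemma key:
  fixes p q :: nat
  assumes pq: "prime p" "prime q" "p < q"
    and r: "r < 2 * p" "\<And>c. c \<ge> 1 \<Longrightarrow> c mod (2 * p) = r \<Longrightarrow> Vb p c"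
    and s: "s < 2 * q" "\<And>c. c \<ge> 1 \<Longrightarrow> c mod (2 * q) = s \<Longrightarrow> Vb q c"
  shows False
proof -
  have p2: "p \<ge> 2" using pq prime_ge_2_nat by blast
  have qodd: "odd q" using pq p2 prime_odd_nat[of q] by simp
  have cqp: "coprime q p" using pq by (simp add: primes_coprime)
  have cq2: "coprime q 2" using qodd by simp
  have cq2p: "coprime q (2 * p)" using cqp cq2 by simp
  show False
  proof (cases "odd p \<or> even s")
    case True
    obtain j where j: "j \<ge> 1" "(j * q) mod (2 * p) = r" using solve_mod[OF cq2p r(1)] by blast
    have "\<exists>k \<ge> 1. (k * p) mod (2 * q) = s"
    proof (cases "odd p")
      case True
      have "coprime p q" using cqp by (simp add: coprime_commute)
      moreover have "coprime p 2" using True by simp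
      ultimately have "coprime p (2 * q)" by simp
      then show ?thesis using solve_mod s(1) by blast
    next
      case False
      then have "even s" using \<open>odd p \<or> even s\<close> by simp
      have "p = 2" using False pq(1) prime_odd_nat[of p] p2 by force
      have "((s div 2 + q) * p) mod (2 * q) = s"
        using \<open>p = 2\<close> \<open>even s\<close> s(1) by (auto simp: algebra_simps elim!: evenE)
      moreover have "s div 2 + q \<ge> 1" using pq(2) prime_gt_0_nat[of q] by simp
      ultimately show ?thesis by blast
    qed
    then obtain k where k: "k \<ge> 1" "(k * p) mod (2 * q) = s" by blast
    have jq: "j * q \<ge> 1" using j(1) p2 pq by (simp add: prime_gt_0_nat)
    have kp: "k * p \<ge> 1" using k(1) p2 by simp
    have "Vb (k * p) (j * q)" using Vb_mult[OF r(2)[OF jq j(2)] k(1)] .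
    moreover have "Vb (j * q) (k * p)" using Vb_mult[OF s(2)[OF kp k(2)] j(1)] .
    ultimately show False by (rule Vb_tr_contra)
  next
    case False
    then have "even p" "odd s" by auto
    have "p = 2" using \<open>even p\<close> pq(1) prime_odd_nat[of p] p2 by force
    have r0: "r \<noteq> 0"
    proof
      assume "r = 0"
      then have "Vb 2 4" using r(2)[of 4] \<open>p = 2\<close> by simp
      then show False using mirror[of 2] by (simp add: Vb_def)
    qed
    have r2: "r \<noteq> 2"
    proof
      assume "r = 2"
      then have "Vb 2 2" using r(2)[of 2] \<open>p = 2\<close> by simp
      then show False using not_Vb22 by simp
    qed
    have rodd: "odd r" using r0 r2 r(1) \<open>p = 2\<close> by presburger
    obtain u where u: "q = 2 * u + 1" using qodd oddE by blast
    have "\<exists>x::nat. x \<le> 1 \<and> (s + 2 * q * x) mod 4 = r"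
    proof -
      have "(s mod 4 = r) \<or> ((s + 2 * (2 * u + 1)) mod 4 = r)"
        using \<open>odd s\<close> rodd r(1) \<open>p = 2\<close> by presburger
      then show ?thesis using u by (metis le_refl mult_1_right mult_zero_right add_0_right zero_le_one)
    qed
    then obtain x where x: "x \<le> 1" "(s + 2 * q * x) mod 4 = r" by blast
    define c where "c = s + 2 * q * (x + 2)"
    have c4: "c mod 4 = r"
    proof -
      have "c = (s + 2 * q * x) + 4 * q" unfolding c_def by (simp add: algebra_simps)
      then show ?thesis using x(2) by simp
    qed
    have c2q: "c mod (2 * q) = s"
    proof -
      have "c = s + (2 * q) * (x + 2)" unfolding c_def by simp
      then have "c mod (2 * q) = s mod (2 * q)" by (simp only: mod_mult_self2)
      then show ?thesis using s(1) by simp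
    qed
    have cge: "c \<ge> 4 * q" unfolding c_def by (simp add: algebra_simps)
    have c1: "c \<ge> 1" using cge pq prime_gt_0_nat[of q] by simp
    have V2: "Vb 2 c" using r(2)[OF c1] c4 \<open>p = 2\<close> by simp
    have Vq: "Vb q c" using s(2)[OF c1 c2q] .
    have codd: "odd c" using c4 rodd by (metis even_mod_4_div_2 odd_mod_4_div_2 mod_mod_trivial dvd_mod_iff dvd_refl even_numeral)
    define k where "k = (c - q) div 2"
    have ck: "c = k * 2 + q" using codd qodd cge unfolding k_def by (auto elim!: oddE)
    have k1: "k \<ge> 1" using cge u ck by simp
    have "Vb (k * 2) c" using Vb_mult[OF V2 k1] .
    then have "Vb (k * 2 + q) c" using Vq by (rule Vb_stack)
    then have "Vb c c" using ck by simp
    then show False using not_Vb_sq by blast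
  qed
qed


lemma OV_iff: "outcome_class S = OV \<longleftrightarrow> first_wins Vertical S \<and> \<not> first_wins Horizontal S"
  unfolding outcome_class_def by (simp split: if_splits)

theorem corollary3p7:
  shows "\<forall>p q :: nat. prime p \<and> prime q
           \<and> infinite {n. n \<ge> 1 \<and> outcome_class (board p n) = OV}
           \<and> infinite {n. n \<ge> 1 \<and> outcome_class (board q n) = OV}
           \<longrightarrow> p = q"
proof (intro allI impI)
  fix p q :: nat
  assume h: "prime p \<and> prime q
           \<and> infinite {n. n \<ge> 1 \<and> outcome_class (board p n) = OV}
           \<and> infinite {n. n \<ge> 1 \<and> outcome_class (board q n) = OV}"
  have N: "{n. n \<ge> 1 \<and> outcome_class (board m n) = OV} = {n. n \<ge> 1 \<and> Vb m n}" for m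
    unfolding OV_iff fw_W Vb_def ..
  have hp: "prime p" and hq: "prime q" using h by simp_all
  have ip: "infinite {n. n \<ge> 1 \<and> Vb p n}" using h N[of p] by simp
  have iq: "infinite {n. n \<ge> 1 \<and> Vb q n}" using h N[of q] by simp
  obtain r where r: "r < 2 * p" "\<forall>c. c \<ge> 1 \<longrightarrow> c mod (2 * p) = r \<longrightarrow> Vb p c"
    using residue[OF ip] by blast
  obtain s where s: "s < 2 * q" "\<forall>c. c \<ge> 1 \<longrightarrow> c mod (2 * q) = s \<longrightarrow> Vb q c"
    using residue[OF iq] by blast
  show "p = q"
  proof (rule ccontr)
    assume "p \<noteq> q"
    then consider "p < q" | "q < p" by linarith
    then show False
    proof cases
      case 1
      show False by (rule key[of p q r s]) (use hp hq 1 r s in auto)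
    next
      case 2
      show False by (rule key[of q p s r]) (use hp hq 2 r s in auto)
    qed
  qed
qed

end
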